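(* Let $T>0$, let $H(t,p)\in C^1([0,T]\times\mathbb{R}^n)$ and let $\sigma\in C^1(\mathbb{R}^n)$ be convex and Lipschitz. Suppose that for some $t_1\in(0,T)$ the function $\omega(x)=u(t_1,x)=\big(\sigma^*+\int_0^{t_1}H(\tau,\cdot)d\tau\big)^*(x)$ is of class $C^1(\mathbb{R}^n)$. Then: (1) every characteristic curve $\mathcal C:\ x=x(t,z)=z+\int_{t_1}^tH_p(\tau,D\omega(z))\,d\tau$, $t\in[t_1,T]$, of problem $(H,\omega)$ can be extended backward to a characteristic curve of problem $(H,\sigma)$ on $[0,T]$ starting at $(0,y)$, where $y=z-\int_0^{t_1}H_p(\tau,D\omega(z))\,d\tau$; that is, the curve $x(t)=z+\int_{t_1}^tH_p(\tau,D\omega(z))d\tau$, $t\in[0,T]$, is the characteristic curve of $(H,\sigma)$ emanating from $y$. (2) Conversely, if $\mathcal C':\ x=x(t,y)=y+\int_0^tH_p(\tau,D\sigma(y))\,d\tau$, $t\in[0,T]$, is a characteristic curve of problem $(H,\sigma)$ which is of type (I) at the point $(t_1,x_1)$, $x_1=x(t_1,y)$, then the restriction of $\mathcal C'$ to $[t_1,T]$ is a characteristic curve of problem $(H,\omega)$ on $[t_1,T]\times\mathbb{R}^n$, namely it equals $x=x_1+\int_{t_1}^tH_p(\tau,D\omega(x_1))d\tau$, $t\in[t_1,T]$.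
   Context: $f^*(y)=\sup_q\{\langle y,q\rangle-f(q)\}$ denotes the Fenchel conjugate; $D\sigma$, $D\omega$ denote gradients and $H_p$ the gradient of $H$ in $p$. Problem $(H,\sigma)$ is the Cauchy problem $u_t+H(t,D_xu)=0$ on $(0,T)\times\mathbb{R}^n$, $u(0,x)=\sigma(x)$; its characteristic curve emanating from $y\in\mathbb{R}^n$ is $x(t,y)=y+\int_0^tH_p(\tau,D\sigma(y))d\tau$, $t\in[0,T]$ (the $x$-component of the solution of $\dot x=H_p$, $\dot v=\langle H_p,p\rangle-H$, $\dot p=0$, $x(0)=y$, $v(0)=\sigma(y)$, $p(0)=D\sigma(y)$). Problem $(H,\omega)$ is the Cauchy problem $u_t+H(t,D_xu)=0$ on $(t_1,T)\times\mathbb{R}^n$, $u(t_1,x)=\omega(x)$; its characteristic curve emanating from $z$ is $x(t,z)=z+\int_{t_1}^tH_p(\tau,D\omega(z))d\tau$, $t\in[t_1,T]$. For $(t,x)$, $\ell(t,x)$ is the set of maximizers $p\in\mathbb{R}^n$ of $q\mapsto\langle x,q\rangle-\sigma^*(q)-\int_0^tH(\tau,q)d\tau$. A characteristic curve of $(H,\sigma)$ emanating from $y$ and passing through $(t_0,x_0)$ is of type (I) at $(t_0,x_0)$ if $D\sigma(y)\in\ell(t_0,x_0)$. *)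

theory Defs
  imports "HOL-Analysis.Analysis" "HOL-Library.Extended_Real"
begin

definition fconj :: "('a::euclidean_space \<Rightarrow> ereal) \<Rightarrow> 'a \<Rightarrow> ereal" where
  "fconj f y = (SUP q. ereal (inner y q) - f q)"

definition ointegral :: "real \<Rightarrow> real \<Rightarrow> (real \<Rightarrow> 'b::euclidean_space) \<Rightarrow> 'b" where
  "ointegral a b f = (if a \<le> b then integral {a..b} f else - integral {b..a} f)"

definition ell :: "('a::euclidean_space \<Rightarrow> real) \<Rightarrow> (real \<Rightarrow> 'a \<Rightarrow> real) \<Rightarrow> real \<Rightarrow> 'a \<Rightarrow> 'a set" where
  "ell \<sigma> H t x = {p. \<forall>q.
      ereal (inner x q) - fconj (\<lambda>z. ereal (\<sigma> z)) q - ereal (integral {0..t} (\<lambda>\<tau>. H \<tau> q))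
      \<le> ereal (inner x p) - fconj (\<lambda>z. ereal (\<sigma> z)) p - ereal (integral {0..t} (\<lambda>\<tau>. H \<tau> p))}"

end

theory Submission imports Defs begin
lemma deriv_le:
  fixes f :: "real \<Rightarrow> real"
  assumes d: "(f has_real_derivative a) (at 0)" and f0: "f 0 = 0"
    and le: "\<forall>s. 0 < s \<and> s \<le> 1 \<longrightarrow> f s \<le> s * c"
  shows "a \<le> c"
proof -
  have "((\<lambda>y. (f y - f 0) / (y - 0)) \<longlongrightarrow> a) (at 0)"
    using d by (simp add: has_field_derivative_iff)
  hence t: "((\<lambda>y. f y / y) \<longlongrightarrow> a) (at_right 0)"
    using f0 by (auto intro: tendsto_mono[OF at_le])
  have "eventually (\<lambda>y. 0 < y \<and> y < 1) (at_right (0::real))"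
    by (simp add: eventually_at_right_field) (auto intro: exI[of _ 1])
  hence "eventually (\<lambda>y. f y / y \<le> c) (at_right (0::real))"
  proof (rule eventually_mono)
    fix y :: real assume "0 < y \<and> y < 1"
    with le have "f y \<le> y * c" by auto
    thus "f y / y \<le> c" using \<open>0 < y \<and> y < 1\<close> by (simp add: divide_le_eq mult.commute)
  qed
  thus ?thesis using tendsto_upperbound[OF t] by simp
qed

lemma dir_deriv:
  fixes f :: "'a::euclidean_space \<Rightarrow> real"
  assumes "(f has_derivative (\<lambda>h. inner d h)) (at x)"
  shows "((\<lambda>s. f (x + s *\<^sub>R v)) has_real_derivative inner d v) (at 0)"
proof -
  have l: "((\<lambda>s::real. x + s *\<^sub>R v) has_derivative (\<lambda>s. s *\<^sub>R v)) (at 0)"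
    by (auto intro!: derivative_eq_intros)
  have a: "(f has_derivative (\<lambda>h. inner d h)) (at (x + 0 *\<^sub>R v))" using assms by simp
  have "((\<lambda>s. f (x + s *\<^sub>R v)) has_derivative (\<lambda>s. inner d (s *\<^sub>R v))) (at 0)"
    using has_derivative_compose[OF l a] by simp
  thus ?thesis unfolding has_field_derivative_def
    by (rule has_derivative_eq_rhs) (auto simp: fun_eq_iff mult.commute)
qed

lemma subgrad_unique:
  fixes f :: "'a::euclidean_space \<Rightarrow> real"
  assumes d: "(f has_derivative (\<lambda>h. inner d h)) (at x)"
    and sg: "\<forall>w. f x + inner p (w - x) \<le> f w"
  shows "p = d"
proof -
  define v where "v = p - d"
  have "((\<lambda>s. - (f (x + s *\<^sub>R v) - f x)) has_real_derivative - inner d v) (at 0)"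
    using DERIV_minus[OF DERIV_diff[OF dir_deriv[OF d, of v] DERIV_const[of "f x"]]] by simp
  moreover have "\<forall>s. 0 < s \<and> s \<le> 1 \<longrightarrow> - (f (x + s *\<^sub>R v) - f x) \<le> s * (- inner p v)"
  proof (intro allI impI)
    fix s :: real
    have "f x + inner p ((x + s *\<^sub>R v) - x) \<le> f (x + s *\<^sub>R v)" using sg by blast
    thus "- (f (x + s *\<^sub>R v) - f x) \<le> s * (- inner p v)" by simp
  qed
  ultimately have "- inner d v \<le> - inner p v" by (intro deriv_le) auto
  hence "inner v v \<le> 0" by (simp add: v_def inner_diff_left)
  hence "inner v v = 0" using inner_ge_zero[of v] by linarith
  hence "v = 0" by simp
  thus ?thesis by (simp add: v_def)
qed

lemma convex_grad:
  fixes f :: "'a::euclidean_space \<Rightarrow> real"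
  assumes c: "convex_on UNIV f" and d: "(f has_derivative (\<lambda>h. inner d h)) (at y)"
  shows "f y + inner d (w - y) \<le> f w"
proof -
  have "((\<lambda>s. f (y + s *\<^sub>R (w - y)) - f y) has_real_derivative inner d (w - y)) (at 0)"
    using DERIV_diff[OF dir_deriv[OF d, of "w - y"] DERIV_const[of "f y"]] by simp
  moreover have "\<forall>s. 0 < s \<and> s \<le> 1 \<longrightarrow> f (y + s *\<^sub>R (w - y)) - f y \<le> s * (f w - f y)"
  proof (intro allI impI)
    fix s :: real assume s: "0 < s \<and> s \<le> 1"
    have "f ((1 - s) *\<^sub>R y + s *\<^sub>R w) \<le> (1 - s) * f y + s * f w"
      using c s by (intro convex_onD) auto
    moreover have "(1 - s) *\<^sub>R y + s *\<^sub>R w = y + s *\<^sub>R (w - y)" by (simp add: algebra_simps)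
    ultimately show "f (y + s *\<^sub>R (w - y)) - f y \<le> s * (f w - f y)" by (simp add: algebra_simps)
  qed
  ultimately have "inner d (w - y) \<le> f w - f y" by (intro deriv_le) auto
  thus ?thesis by simp
qed

lemma H_cont:
  fixes H Ht :: "real \<Rightarrow> 'a::euclidean_space \<Rightarrow> real" and Hp :: "real \<Rightarrow> 'a \<Rightarrow> 'a"
  assumes H_C1: "\<forall>t\<in>{0..T}. \<forall>p. ((\<lambda>(s, q). H s q) has_derivative
                 (\<lambda>(ds, dq). Ht t p * ds + inner (Hp t p) dq)) (at (t, p) within {0..T} \<times> UNIV)"
  shows "continuous_on ({0..T} \<times> UNIV) (\<lambda>(t, p). H t p)"
  unfolding continuous_on_eq_continuous_within
proof
  fix x :: "real \<times> 'a" assume "x \<in> {0..T} \<times> UNIV"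
  then obtain t p where x: "x = (t, p)" "t \<in> {0..T}" by auto
  show "continuous (at x within {0..T} \<times> UNIV) (\<lambda>(t, p). H t p)"
    using has_derivative_continuous[OF H_C1[rule_format, OF x(2), of p]] x(1) by simp
qed

lemma I_cont:
  fixes H Ht :: "real \<Rightarrow> 'a::euclidean_space \<Rightarrow> real" and Hp :: "real \<Rightarrow> 'a \<Rightarrow> 'a"
  assumes H_C1: "\<forall>t\<in>{0..T}. \<forall>p. ((\<lambda>(s, q). H s q) has_derivative
                 (\<lambda>(ds, dq). Ht t p * ds + inner (Hp t p) dq)) (at (t, p) within {0..T} \<times> UNIV)"
    and b: "b \<le> T"
  shows "continuous_on UNIV (\<lambda>q. integral {0..b} (\<lambda>\<tau>. H \<tau> q))"
proof -
  have c: "continuous_on ({0..T} \<times> UNIV) (\<lambda>(t, p). H t p)" by (rule H_cont[OF H_C1])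
  have "continuous_on (UNIV \<times> cbox 0 b) (\<lambda>(q, \<tau>). H \<tau> q)"
  proof -
    have "continuous_on (UNIV \<times> cbox 0 b) (\<lambda>x. (\<lambda>(t, p). H t p) (prod.swap x))"
      by (rule continuous_on_compose2[OF c]) (use b in \<open>auto intro!: continuous_intros\<close>)
    thus ?thesis by (simp add: case_prod_unfold)
  qed
  from integral_continuous_on_param[OF this] show ?thesis by simp
qed

lemma I_dir:
  fixes H Ht :: "real \<Rightarrow> 'a::euclidean_space \<Rightarrow> real" and Hp :: "real \<Rightarrow> 'a \<Rightarrow> 'a"
  assumes H_C1: "\<forall>t\<in>{0..T}. \<forall>p. ((\<lambda>(s, q). H s q) has_derivative
                 (\<lambda>(ds, dq). Ht t p * ds + inner (Hp t p) dq)) (at (t, p) within {0..T} \<times> UNIV)"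
    and Hp_cont: "continuous_on ({0..T} \<times> UNIV) (\<lambda>(t, p). Hp t p)"
    and b: "b \<le> T"
  shows "((\<lambda>s. integral {0..b} (\<lambda>\<tau>. H \<tau> (p + s *\<^sub>R v))) has_real_derivative
           inner (integral {0..b} (\<lambda>\<tau>. Hp \<tau> p)) v) (at 0)"
proof -
  have c: "continuous_on ({0..T} \<times> UNIV) (\<lambda>(t, p). H t p)" by (rule H_cont[OF H_C1])
  have fx: "((\<lambda>s. H \<tau> (p + s *\<^sub>R v)) has_field_derivative inner (Hp \<tau> (p + s *\<^sub>R v)) v) (at s within UNIV)"
    if "s \<in> UNIV" "\<tau> \<in> cbox 0 b" for s \<tau>
  proof -
    have \<tau>: "\<tau> \<in> {0..T}" using that b by auto
    have g: "\<forall>x\<in>{0..T} \<times> UNIV. ((\<lambda>(s, q). H s q) has_derivative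
       (\<lambda>(ds, dq). Ht (fst x) (snd x) * ds + inner (Hp (fst x) (snd x)) dq)) (at x within {0..T} \<times> UNIV)"
      using H_C1 by auto
    have f: "((\<lambda>s. (\<tau>, p + s *\<^sub>R v)) has_derivative (\<lambda>h. (0, h *\<^sub>R v))) (at s within UNIV)"
      by (auto intro!: derivative_eq_intros)
    have "((\<lambda>s. (\<lambda>(s, q). H s q) (\<tau>, p + s *\<^sub>R v)) has_derivative
       (\<lambda>h. (\<lambda>(ds, dq). Ht (fst (\<tau>, p + s *\<^sub>R v)) (snd (\<tau>, p + s *\<^sub>R v)) * ds
             + inner (Hp (fst (\<tau>, p + s *\<^sub>R v)) (snd (\<tau>, p + s *\<^sub>R v))) dq) (0, h *\<^sub>R v))) (at s within UNIV)"
      by (rule has_derivative_in_compose2[OF g[rule_format] _ _ f]) (use \<tau> in auto)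
    hence "((\<lambda>s. H \<tau> (p + s *\<^sub>R v)) has_derivative (\<lambda>h. inner (Hp \<tau> (p + s *\<^sub>R v)) (h *\<^sub>R v))) (at s)"
      by simp
    thus ?thesis unfolding has_field_derivative_def
      by (rule has_derivative_eq_rhs) (auto simp: fun_eq_iff mult.commute)
  qed
  have int: "(\<lambda>\<tau>. H \<tau> (p + s *\<^sub>R v)) integrable_on cbox 0 b" for s
  proof -
    have "continuous_on (cbox 0 b) (\<lambda>\<tau>. (\<lambda>(t, p). H t p) (\<tau>, p + s *\<^sub>R v))"
      by (rule continuous_on_compose2[OF c]) (use b in \<open>auto intro!: continuous_intros\<close>)
    thus ?thesis by (intro integrable_continuous) simp
  qed
  have cfx: "continuous_on (UNIV \<times> cbox 0 b) (\<lambda>(s, \<tau>). inner (Hp \<tau> (p + s *\<^sub>R v)) v)"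
  proof -
    have "continuous_on (UNIV \<times> cbox 0 b) (\<lambda>x. (\<lambda>(t, p). Hp t p) (snd x, p + fst x *\<^sub>R v))"
      by (rule continuous_on_compose2[OF Hp_cont]) (use b in \<open>auto intro!: continuous_intros\<close>)
    hence "continuous_on (UNIV \<times> cbox 0 b) (\<lambda>x. inner ((\<lambda>(t, p). Hp t p) (snd x, p + fst x *\<^sub>R v)) v)"
      by (intro continuous_intros)
    thus ?thesis by (simp add: case_prod_unfold)
  qed
  have "((\<lambda>s. integral (cbox 0 b) (\<lambda>\<tau>. H \<tau> (p + s *\<^sub>R v))) has_field_derivative
          integral (cbox 0 b) (\<lambda>\<tau>. inner (Hp \<tau> (p + 0 *\<^sub>R v)) v)) (at 0 within UNIV)"
    by (rule leibniz_rule_field_derivative[OF fx int cfx]) auto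
  moreover have "integral (cbox 0 b) (\<lambda>\<tau>. inner (Hp \<tau> (p + 0 *\<^sub>R v)) v)
      = inner (integral {0..b} (\<lambda>\<tau>. Hp \<tau> p)) v"
  proof -
    have "continuous_on (cbox 0 b) (\<lambda>\<tau>. (\<lambda>(t, p). Hp t p) (\<tau>, p))"
      by (rule continuous_on_compose2[OF Hp_cont]) (use b in \<open>auto intro!: continuous_intros\<close>)
    hence "(\<lambda>\<tau>. Hp \<tau> p) integrable_on cbox 0 b" by (intro integrable_continuous) simp
    hence "(\<lambda>\<tau>. Hp \<tau> p) integrable_on {0..b}" by simp
    thus ?thesis by (simp add: integral_inner_left)
  qed
  ultimately show ?thesis by simp
qed


theorem theorem4p3:
  fixes T t1 :: real
    and H Ht :: "real \<Rightarrow> 'a::euclidean_space \<Rightarrow> real"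
    and Hp :: "real \<Rightarrow> 'a \<Rightarrow> 'a"
    and \<sigma> \<omega> :: "'a \<Rightarrow> real"
    and D\<sigma> D\<omega> :: "'a \<Rightarrow> 'a"
  assumes T_pos: "T > 0"
    and H_C1: "\<forall>t\<in>{0..T}. \<forall>p. ((\<lambda>(s, q). H s q) has_derivative
                 (\<lambda>(ds, dq). Ht t p * ds + inner (Hp t p) dq)) (at (t, p) within {0..T} \<times> UNIV)"
    and Ht_cont: "continuous_on ({0..T} \<times> UNIV) (\<lambda>(t, p). Ht t p)"
    and Hp_cont: "continuous_on ({0..T} \<times> UNIV) (\<lambda>(t, p). Hp t p)"
    and \<sigma>_deriv: "\<forall>x. (\<sigma> has_derivative (\<lambda>h. inner (D\<sigma> x) h)) (at x)"
    and \<sigma>_C1: "continuous_on UNIV D\<sigma>"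
    and \<sigma>_convex: "convex_on UNIV \<sigma>"
    and \<sigma>_lip: "\<exists>L. \<forall>x y. \<bar>\<sigma> x - \<sigma> y\<bar> \<le> L * dist x y"
    and t1: "0 < t1" "t1 < T"
    and \<omega>_def: "\<forall>x. ereal (\<omega> x) =
        fconj (\<lambda>q. fconj (\<lambda>z. ereal (\<sigma> z)) q + ereal (integral {0..t1} (\<lambda>\<tau>. H \<tau> q))) x"
    and \<omega>_deriv: "\<forall>x. (\<omega> has_derivative (\<lambda>h. inner (D\<omega> x) h)) (at x)"
    and \<omega>_C1: "continuous_on UNIV D\<omega>"
  shows
    "(\<forall>z. let y = z - integral {0..t1} (\<lambda>\<tau>. Hp \<tau> (D\<omega> z)) in
        \<forall>t\<in>{0..T}. z + ointegral t1 t (\<lambda>\<tau>. Hp \<tau> (D\<omega> z))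
                   = y + integral {0..t} (\<lambda>\<tau>. Hp \<tau> (D\<sigma> y)))
     \<and>
     (\<forall>y. let x1 = y + integral {0..t1} (\<lambda>\<tau>. Hp \<tau> (D\<sigma> y)) in
        D\<sigma> y \<in> ell \<sigma> H t1 x1 \<longrightarrow>
        (\<forall>t\<in>{t1..T}. y + integral {0..t} (\<lambda>\<tau>. Hp \<tau> (D\<sigma> y))
                      = x1 + integral {t1..t} (\<lambda>\<tau>. Hp \<tau> (D\<omega> x1))))" (is "?P1 \<and> ?P2")
proof -
  define S where "S = fconj (\<lambda>z. ereal (\<sigma> z))"
  define I where "I q = integral {0..t1} (\<lambda>\<tau>. H \<tau> q)" for q
  define J where "J q = integral {0..t1} (\<lambda>\<tau>. Hp \<tau> q)" for q
  have S_le: "S q \<le> ereal c \<longleftrightarrow> (\<forall>w. inner w q - \<sigma> w \<le> c)" for q c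
    unfolding S_def fconj_def by (simp add: SUP_le_iff inner_commute)
  have S_ge: "ereal (inner w q - \<sigma> w) \<le> S q" for w q
    unfolding S_def fconj_def by (rule SUP_upper2[of w]) (auto simp: inner_commute)
  have S_ninf: "S q \<noteq> -\<infinity>" for q
    using S_ge[of 0 q] by auto
  obtain L where L: "\<forall>x y. \<bar>\<sigma> x - \<sigma> y\<bar> \<le> L * dist x y" using \<sigma>_lip by blast
  have S_bound: "norm q \<le> \<bar>L\<bar>" if "S q \<le> ereal c" for q c
  proof (rule ccontr)
    assume nq: "\<not> norm q \<le> \<bar>L\<bar>"
    define a where "a = norm q * (norm q - L)"
    have a: "a > 0" using nq unfolding a_def
      by (intro mult_pos_pos) auto
    define K where "K = c + \<sigma> 0"
    define s where "s = (\<bar>K\<bar> + 1) / a"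
    have s: "s > 0" using a by (simp add: s_def)
    have "inner (s *\<^sub>R q) q - \<sigma> (s *\<^sub>R q) \<le> c" using that S_le by blast
    moreover have "\<sigma> (s *\<^sub>R q) \<le> \<sigma> 0 + L * (s * norm q)"
      using L[rule_format, of "s *\<^sub>R q" 0] s by (simp add: dist_norm)
    moreover have "inner q q = norm q * norm q"
      by (metis power2_eq_square power2_norm_eq_inner)
    ultimately have "s * a \<le> K" unfolding a_def K_def by (simp add: algebra_simps)
    moreover have "s * a = \<bar>K\<bar> + 1" using a by (simp add: s_def)
    ultimately show False by linarith
  qed
  have om_ge: "ereal (inner x q) - (S q + ereal (I q)) \<le> ereal (\<omega> x)" for x q
    unfolding \<omega>_def[rule_format] S_def I_def fconj_def by (rule SUP_upper) auto
  have om_ge': "inner x q - c - I q \<le> \<omega> x" if "S q = ereal c" for x q c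
    using om_ge[of x q] that by simp
  have Sgrad: "S (D\<sigma> y) = ereal (inner y (D\<sigma> y) - \<sigma> y)" for y
  proof (rule antisym)
    show "S (D\<sigma> y) \<le> ereal (inner y (D\<sigma> y) - \<sigma> y)"
      unfolding S_le
    proof
      fix w
      have "\<sigma> y + inner (D\<sigma> y) (w - y) \<le> \<sigma> w"
        by (rule convex_grad[OF \<sigma>_convex \<sigma>_deriv[rule_format]])
      thus "inner w (D\<sigma> y) - \<sigma> w \<le> inner y (D\<sigma> y) - \<sigma> y"
        by (simp add: inner_diff_right inner_commute)
    qed
    show "ereal (inner y (D\<sigma> y) - \<sigma> y) \<le> S (D\<sigma> y)" by (rule S_ge)
  qed
  have Hp_int: "(\<lambda>\<tau>. Hp \<tau> q) integrable_on {a..b}" if "0 \<le> a" "b \<le> T" for a b q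
  proof -
    have "continuous_on (cbox a b) (\<lambda>\<tau>. (\<lambda>(t, p). Hp t p) (\<tau>, q))"
      by (rule continuous_on_compose2[OF Hp_cont]) (use that in \<open>auto intro!: continuous_intros\<close>)
    hence "(\<lambda>\<tau>. Hp \<tau> q) integrable_on cbox a b" by (intro integrable_continuous) simp
    thus ?thesis by simp
  qed
  have part2: "?P2"
  proof (intro allI)
    fix y
    define p where "p = D\<sigma> y"
    define x1 where "x1 = y + J p"
    have Sp: "S p = ereal (inner y p - \<sigma> y)" unfolding p_def by (rule Sgrad)
    have "D\<sigma> y \<in> ell \<sigma> H t1 x1 \<longrightarrow>
        (\<forall>t\<in>{t1..T}. y + integral {0..t} (\<lambda>\<tau>. Hp \<tau> (D\<sigma> y))
                      = x1 + integral {t1..t} (\<lambda>\<tau>. Hp \<tau> (D\<omega> x1)))"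
    proof
      assume "D\<sigma> y \<in> ell \<sigma> H t1 x1"
      hence ell: "ereal (inner x1 q) - S q - ereal (I q) \<le> ereal (inner x1 p) - S p - ereal (I p)" for q
        unfolding ell_def S_def[symmetric] I_def[symmetric] p_def[symmetric] by blast
      have "ereal (\<omega> x1) \<le> ereal (inner x1 p - (inner y p - \<sigma> y) - I p)"
        unfolding \<omega>_def[rule_format] fconj_def S_def[symmetric] I_def[symmetric]
      proof (rule SUP_least)
        fix q
        have "ereal (inner x1 q) - (S q + ereal (I q)) = ereal (inner x1 q) - S q - ereal (I q)"
          by (cases "S q") auto
        also have "\<dots> \<le> ereal (inner x1 p) - S p - ereal (I p)" by (rule ell)
        also have "\<dots> = ereal (inner x1 p - (inner y p - \<sigma> y) - I p)" using Sp by simp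
        finally show "ereal (inner x1 q) - (S q + ereal (I q)) \<le> ereal (inner x1 p - (inner y p - \<sigma> y) - I p)" .
      qed
      hence om1: "\<omega> x1 \<le> inner x1 p - (inner y p - \<sigma> y) - I p" by simp
      have "\<forall>x. \<omega> x1 + inner p (x - x1) \<le> \<omega> x"
      proof
        fix x
        have "inner x p - (inner y p - \<sigma> y) - I p \<le> \<omega> x" by (rule om_ge'[OF Sp])
        thus "\<omega> x1 + inner p (x - x1) \<le> \<omega> x" using om1
          by (simp add: inner_diff_right inner_commute)
      qed
      hence pD: "p = D\<omega> x1" by (rule subgrad_unique[OF \<omega>_deriv[rule_format], rotated])
      show "\<forall>t\<in>{t1..T}. y + integral {0..t} (\<lambda>\<tau>. Hp \<tau> (D\<sigma> y))
                      = x1 + integral {t1..t} (\<lambda>\<tau>. Hp \<tau> (D\<omega> x1))"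
      proof
        fix t assume t: "t \<in> {t1..T}"
        have "integral {0..t1} (\<lambda>\<tau>. Hp \<tau> p) + integral {t1..t} (\<lambda>\<tau>. Hp \<tau> p)
              = integral {0..t} (\<lambda>\<tau>. Hp \<tau> p)"
          by (rule Henstock_Kurzweil_Integration.integral_combine) (use t t1 Hp_int in auto)
        thus "y + integral {0..t} (\<lambda>\<tau>. Hp \<tau> (D\<sigma> y))
                      = x1 + integral {t1..t} (\<lambda>\<tau>. Hp \<tau> (D\<omega> x1))"
          unfolding pD[symmetric] p_def[symmetric] unfolding x1_def J_def by (simp add: algebra_simps)
      qed
    qed
    thus "let x1 = y + integral {0..t1} (\<lambda>\<tau>. Hp \<tau> (D\<sigma> y)) in
        D\<sigma> y \<in> ell \<sigma> H t1 x1 \<longrightarrow>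
        (\<forall>t\<in>{t1..T}. y + integral {0..t} (\<lambda>\<tau>. Hp \<tau> (D\<sigma> y))
                      = x1 + integral {t1..t} (\<lambda>\<tau>. Hp \<tau> (D\<omega> x1)))"
      unfolding x1_def J_def p_def Let_def .
  qed
  have Icont: "isCont I q" for q
  proof -
    have "continuous_on UNIV (\<lambda>q. integral {0..t1} (\<lambda>\<tau>. H \<tau> q))"
      by (rule I_cont[OF H_C1]) (use t1 in auto)
    hence "continuous_on UNIV I" unfolding I_def .
    thus ?thesis using continuous_on_eq_continuous_at[OF open_UNIV] by blast
  qed
  have part1: "?P1"
  proof (intro allI)
    fix z
    define p where "p = D\<omega> z"
    define y where "y = z - J p"
    define eps where "eps k = inverse (real (Suc k))" for k
    have ex: "\<forall>k. \<exists>q. ereal (\<omega> z - eps k) < ereal (inner z q) - (S q + ereal (I q))"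
    proof
      fix k
      have "ereal (\<omega> z - eps k) < ereal (\<omega> z)" by (simp add: eps_def)
      also have "\<dots> = (SUP q. ereal (inner z q) - (S q + ereal (I q)))"
        unfolding \<omega>_def[rule_format] fconj_def S_def I_def ..
      finally show "\<exists>q. ereal (\<omega> z - eps k) < ereal (inner z q) - (S q + ereal (I q))" by (simp add: less_SUP_iff)
    qed
    obtain Q where Q: "\<And>k. ereal (\<omega> z - eps k) < ereal (inner z (Q k)) - (S (Q k) + ereal (I (Q k)))"
      using choice[OF ex] by blast
    define c where "c k = real_of_ereal (S (Q k))" for k
    have Sc: "S (Q k) = ereal (c k)" for k
    proof -
      have "S (Q k) \<noteq> \<infinity>" using Q[of k] by auto
      thus ?thesis using S_ninf[of "Q k"] unfolding c_def by (cases "S (Q k)") auto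
    qed
    have Qk: "\<omega> z - eps k < inner z (Q k) - c k - I (Q k)" for k
      using Q[of k] Sc[of k] by simp
    have Qb: "Q k \<in> cball 0 \<bar>L\<bar>" for k
      using S_bound[of "Q k" "c k"] Sc[of k] by simp
    obtain l r where r: "strict_mono r" and lr: "(Q \<circ> r) \<longlonglongrightarrow> l"
    proof -
      have Qb': "\<forall>k. Q k \<in> cball 0 \<bar>L\<bar>" using Qb by blast
      show ?thesis by (rule seq_compactE[OF compact_imp_seq_compact[OF compact_cball] Qb']) (rule that)
    qed
    have eps0: "(\<lambda>k. eps (r k)) \<longlonglongrightarrow> 0"
      using LIMSEQ_subseq_LIMSEQ[OF LIMSEQ_inverse_real_of_nat r] unfolding eps_def o_def .
    have Ql: "(\<lambda>k. Q (r k)) \<longlonglongrightarrow> l" using lr unfolding o_def .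
    have IQl: "(\<lambda>k. I (Q (r k))) \<longlonglongrightarrow> I l" by (rule isCont_tendsto_compose[OF Icont Ql])
    have "\<forall>x. \<omega> z + inner l (x - z) \<le> \<omega> x"
    proof
      fix x
      have le: "\<omega> z - eps k + inner (x - z) (Q k) \<le> \<omega> x" for k
        using om_ge'[OF Sc[of k], of x] Qk[of k] by (simp add: inner_diff_left)
      have "(\<lambda>k. \<omega> z - eps (r k) + inner (x - z) (Q (r k))) \<longlonglongrightarrow> \<omega> z - 0 + inner (x - z) l"
        by (intro tendsto_intros eps0 Ql)
      hence "\<omega> z - 0 + inner (x - z) l \<le> \<omega> x"
        by (rule LIMSEQ_le_const2) (use le in auto)
      thus "\<omega> z + inner l (x - z) \<le> \<omega> x" by (simp add: inner_commute)
    qed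
    hence lp: "l = p" unfolding p_def by (rule subgrad_unique[OF \<omega>_deriv[rule_format], rotated])
    define cp where "cp = inner z p - I p - \<omega> z"
    have cpw: "inner w p - \<sigma> w \<le> cp" for w
    proof -
      have le: "\<omega> z - eps k \<le> inner (z - w) (Q k) + \<sigma> w - I (Q k)" for k
      proof -
        have "ereal (inner w (Q k) - \<sigma> w) \<le> ereal (c k)" using S_ge[of w "Q k"] Sc[of k] by simp
        thus ?thesis using Qk[of k] by (simp add: inner_diff_left)
      qed
      have l2: "(\<lambda>k. inner (z - w) (Q (r k)) + \<sigma> w - I (Q (r k))) \<longlonglongrightarrow> inner (z - w) l + \<sigma> w - I l"
        by (intro tendsto_intros Ql IQl)
      have l1: "(\<lambda>k. \<omega> z - eps (r k)) \<longlonglongrightarrow> \<omega> z - 0"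
        by (intro tendsto_intros eps0)
      have "\<omega> z - 0 \<le> inner (z - w) l + \<sigma> w - I l"
        by (rule LIMSEQ_le[OF l1 l2]) (use le in blast)
      thus ?thesis unfolding cp_def lp by (simp add: inner_diff_left)
    qed
    have Sp: "S p = ereal cp"
    proof -
      have up: "S p \<le> ereal cp" using cpw S_le by blast
      then obtain sp where sp: "S p = ereal sp" using S_ninf[of p] by (cases "S p") auto
      have "inner z p - sp - I p \<le> \<omega> z" by (rule om_ge'[OF sp])
      thus ?thesis using up sp unfolding cp_def by simp
    qed
    define r0 where "r0 = D\<sigma> y"
    define cr where "cr = inner y r0 - \<sigma> y"
    have Sr0: "S r0 = ereal cr" unfolding r0_def cr_def by (rule Sgrad)
    define v where "v = r0 - p"
    define f where "f s = s * inner z v - (I (p + s *\<^sub>R v) - I p)" for s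
    have fle: "\<forall>s. 0 < s \<and> s \<le> 1 \<longrightarrow> f s \<le> s * (cr - cp)"
    proof (intro allI impI)
      fix s :: real assume s: "0 < s \<and> s \<le> 1"
      define qs where "qs = p + s *\<^sub>R v"
      have seg: "S qs \<le> ereal ((1 - s) * cp + s * cr)"
        unfolding S_le
      proof
        fix w
        have A: "inner w p - \<sigma> w \<le> cp" by (rule cpw)
        have "S r0 \<le> ereal cr" using Sr0 by simp
        hence B: "inner w r0 - \<sigma> w \<le> cr" using S_le[of r0 cr] by blast
        have "inner w qs - \<sigma> w = (1 - s) * (inner w p - \<sigma> w) + s * (inner w r0 - \<sigma> w)"
        proof -
          have "inner w qs = inner w p + s * (inner w r0 - inner w p)"
            unfolding qs_def v_def by (simp add: inner_add_right inner_diff_right)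
          thus ?thesis by (simp add: algebra_simps)
        qed
        also have "\<dots> \<le> (1 - s) * cp + s * cr"
          using s A B by (intro add_mono mult_left_mono) auto
        finally show "inner w qs - \<sigma> w \<le> (1 - s) * cp + s * cr" .
      qed
      then obtain d where d: "S qs = ereal d" using S_ninf[of qs] by (cases "S qs") auto
      have dle: "d \<le> (1 - s) * cp + s * cr" using seg d by simp
      have "inner z qs - d - I qs \<le> \<omega> z" by (rule om_ge'[OF d])
      moreover have "inner z qs = inner z p + s * inner z v"
        unfolding qs_def by (simp add: inner_add_right)
      ultimately have "s * inner z v - (I qs - I p) \<le> d - cp" unfolding cp_def by linarith
      also have "\<dots> \<le> s * (cr - cp)" using dle by (simp add: algebra_simps)
      finally show "f s \<le> s * (cr - cp)" unfolding f_def qs_def .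
    qed
    have "((\<lambda>s. integral {0..t1} (\<lambda>\<tau>. H \<tau> (p + s *\<^sub>R v))) has_real_derivative
           inner (integral {0..t1} (\<lambda>\<tau>. Hp \<tau> p)) v) (at 0)"
      by (rule I_dir[OF H_C1 Hp_cont]) (use t1 in auto)
    hence Id: "((\<lambda>s. I (p + s *\<^sub>R v)) has_real_derivative inner (J p) v) (at 0)"
      unfolding I_def J_def .
    have fd: "(f has_real_derivative inner z v - inner (J p) v) (at 0)"
      unfolding f_def[abs_def]
      using DERIV_diff[OF DERIV_cmult_Id[of "inner z v"] DERIV_diff[OF Id DERIV_const[of "I p"]]]
      by (simp add: mult.commute)
    have "inner z v - inner (J p) v \<le> cr - cp"
      by (rule deriv_le[OF fd]) (use fle in \<open>auto simp: f_def\<close>)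
    hence "cp \<le> inner y p - \<sigma> y"
      unfolding cr_def v_def y_def by (simp add: inner_diff_left inner_diff_right)
    hence "\<forall>w. \<sigma> y + inner p (w - y) \<le> \<sigma> w"
    proof (intro allI)
      fix w assume "cp \<le> inner y p - \<sigma> y"
      moreover have "inner w p - \<sigma> w \<le> cp" by (rule cpw)
      moreover have "inner p (w - y) = inner w p - inner y p"
        by (simp add: inner_diff_right inner_commute)
      ultimately show "\<sigma> y + inner p (w - y) \<le> \<sigma> w" by linarith
    qed
    hence pDs: "p = D\<sigma> y" by (rule subgrad_unique[OF \<sigma>_deriv[rule_format], rotated])
    have curve: "z + ointegral t1 t (\<lambda>\<tau>. Hp \<tau> p) = y + integral {0..t} (\<lambda>\<tau>. Hp \<tau> p)"
      if t: "t \<in> {0..T}" for t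
    proof (cases "t1 \<le> t")
      case True
      have "integral {0..t1} (\<lambda>\<tau>. Hp \<tau> p) + integral {t1..t} (\<lambda>\<tau>. Hp \<tau> p)
            = integral {0..t} (\<lambda>\<tau>. Hp \<tau> p)"
        by (rule Henstock_Kurzweil_Integration.integral_combine) (use t t1 True Hp_int in auto)
      thus ?thesis using True unfolding ointegral_def y_def J_def by (simp add: algebra_simps)
    next
      case False
      have "integral {0..t} (\<lambda>\<tau>. Hp \<tau> p) + integral {t..t1} (\<lambda>\<tau>. Hp \<tau> p)
            = integral {0..t1} (\<lambda>\<tau>. Hp \<tau> p)"
        by (rule Henstock_Kurzweil_Integration.integral_combine) (use t t1 False Hp_int in auto)
      thus ?thesis using False unfolding ointegral_def y_def J_def by (simp add: algebra_simps)
    qed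
    show "let y = z - integral {0..t1} (\<lambda>\<tau>. Hp \<tau> (D\<omega> z)) in
        \<forall>t\<in>{0..T}. z + ointegral t1 t (\<lambda>\<tau>. Hp \<tau> (D\<omega> z))
                   = y + integral {0..t} (\<lambda>\<tau>. Hp \<tau> (D\<sigma> y))"
      unfolding Let_def J_def[symmetric] p_def[symmetric] y_def[symmetric] pDs[symmetric] using curve by blast
  qed
  show ?thesis using part1 part2 by blast
qed
end
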